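(* Let $G_1,G_2$ be groups with finite generating sets $S_1,S_2$ respectively (each symmetric and not containing the identity), and let $S=(S_1\times\{e\})\cup(\{e\}\times S_2)$ be the split generating set of $G_1\times G_2$. Then for all $(x,y)\in G_1\times G_2$, $$\mathrm{Av}((x,y))=\frac{|S_1|\,\mathrm{Av}(x)+|S_1|\,|y|+|S_2|\,|x|+|S_2|\,\mathrm{Av}(y)}{|S_1|+|S_2|},$$ where $\mathrm{Av}((x,y))$ is computed in $(G_1\times G_2,S)$, $\mathrm{Av}(x)$ and $|x|$ in $(G_1,S_1)$, and $\mathrm{Av}(y)$ and $|y|$ in $(G_2,S_2)$.
   Context: For a group $G$ with finite generating set $S$, $|x|$ denotes the word length of $x$ with respect to $S$, and $\mathrm{Av}(g)=\frac{1}{|S|}\sum_{a\in S}|a^{-1}ga|$. *)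

theory Defs
  imports "HOL-Algebra.Algebra"
begin

text \<open>Word length of x in group G w.r.t. generating set S (S symmetric, so
words over S suffice): least number of generators whose product is x.\<close>
definition word_length :: "('a, 'b) monoid_scheme \<Rightarrow> 'a set \<Rightarrow> 'a \<Rightarrow> nat" where
  "word_length G S x =
     (LEAST n. \<exists>ws. length ws = n \<and> set ws \<subseteq> S \<and> x = foldr (\<otimes>\<^bsub>G\<^esub>) ws \<one>\<^bsub>G\<^esub>)"

definition Av :: "('a, 'b) monoid_scheme \<Rightarrow> 'a set \<Rightarrow> 'a \<Rightarrow> real" where
  "Av G S g = (\<Sum>a\<in>S. real (word_length G S (inv\<^bsub>G\<^esub> a \<otimes>\<^bsub>G\<^esub> g \<otimes>\<^bsub>G\<^esub> a))) / real (card S)"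

definition fin_sym_gen_set :: "('a, 'b) monoid_scheme \<Rightarrow> 'a set \<Rightarrow> bool" where
  "fin_sym_gen_set G S \<longleftrightarrow> finite S \<and> S \<subseteq> carrier G \<and> \<one>\<^bsub>G\<^esub> \<notin> S
     \<and> (\<forall>s\<in>S. inv\<^bsub>G\<^esub> s \<in> S) \<and> generate G S = carrier G"

end

theory Submission
  imports Defs
begin

lemma foldr_carrier:
  assumes "monoid G" "set ws \<subseteq> carrier G"
  shows "foldr (\<otimes>\<^bsub>G\<^esub>) ws \<one>\<^bsub>G\<^esub> \<in> carrier G"
  using assms(2) by (induction ws) (auto intro: monoid.m_closed[OF assms(1)] monoid.one_closed[OF assms(1)])

lemma foldr_append_mult:
  assumes "monoid G" "set ws \<subseteq> carrier G" "set vs \<subseteq> carrier G"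
  shows "foldr (\<otimes>\<^bsub>G\<^esub>) (ws @ vs) \<one>\<^bsub>G\<^esub> =
         foldr (\<otimes>\<^bsub>G\<^esub>) ws \<one>\<^bsub>G\<^esub> \<otimes>\<^bsub>G\<^esub> foldr (\<otimes>\<^bsub>G\<^esub>) vs \<one>\<^bsub>G\<^esub>"
  using assms(2)
proof (induction ws)
  case Nil
  then show ?case using foldr_carrier[OF assms(1,3)] by (simp add: monoid.l_one[OF assms(1)])
next
  case (Cons a ws)
  then show ?case
    using foldr_carrier[OF assms(1,3)] foldr_carrier[OF assms(1), of ws]
    by (simp add: monoid.m_assoc[OF assms(1)])
qed

lemma words_exist:
  assumes "group G" "fin_sym_gen_set G S" "x \<in> carrier G"
  shows "\<exists>ws. set ws \<subseteq> S \<and> x = foldr (\<otimes>\<^bsub>G\<^esub>) ws \<one>\<^bsub>G\<^esub>"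
proof -
  have S: "S \<subseteq> carrier G" "\<And>s. s \<in> S \<Longrightarrow> inv\<^bsub>G\<^esub> s \<in> S" "generate G S = carrier G"
    using assms(2) unfolding fin_sym_gen_set_def by auto
  have m: "monoid G" using assms(1) by (simp add: group.is_monoid)
  have "x \<in> generate G S" using S(3) assms(3) by simp
  then show ?thesis
  proof (induction rule: generate.induct)
    case one
    then show ?case by (rule exI[of _ "[]"]) simp
  next
    case (incl h)
    then show ?case using S(1) by (intro exI[of _ "[h]"]) (auto simp: monoid.r_one[OF m])
  next
    case (inv h)
    then show ?case using S(1,2)
      by (intro exI[of _ "[inv\<^bsub>G\<^esub> h]"]) (auto simp: monoid.r_one[OF m] group.inv_closed[OF assms(1)])
  next
    case (eng h1 h2)
    then obtain w1 w2 where "set w1 \<subseteq> S" "h1 = foldr (\<otimes>\<^bsub>G\<^esub>) w1 \<one>\<^bsub>G\<^esub>"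
      "set w2 \<subseteq> S" "h2 = foldr (\<otimes>\<^bsub>G\<^esub>) w2 \<one>\<^bsub>G\<^esub>" by blast
    then show ?case using S(1)
      by (intro exI[of _ "w1 @ w2"]) (auto simp: foldr_append_mult[OF m] simp del: foldr_append)
  qed
qed

lemma wl_le:
  assumes "set ws \<subseteq> S" "x = foldr (\<otimes>\<^bsub>G\<^esub>) ws \<one>\<^bsub>G\<^esub>"
  shows "word_length G S x \<le> length ws"
  unfolding word_length_def using assms by (intro Least_le) blast

lemma wl_attained:
  assumes "group G" "fin_sym_gen_set G S" "x \<in> carrier G"
  shows "\<exists>ws. length ws = word_length G S x \<and> set ws \<subseteq> S \<and> x = foldr (\<otimes>\<^bsub>G\<^esub>) ws \<one>\<^bsub>G\<^esub>"
proof -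
  obtain ws where "set ws \<subseteq> S \<and> x = foldr (\<otimes>\<^bsub>G\<^esub>) ws \<one>\<^bsub>G\<^esub>"
    using words_exist[OF assms] by blast
  then have "\<exists>n ws. length ws = n \<and> set ws \<subseteq> S \<and> x = foldr (\<otimes>\<^bsub>G\<^esub>) ws \<one>\<^bsub>G\<^esub>" by blast
  then show ?thesis unfolding word_length_def by (rule LeastI_ex)
qed

lemma wl_step:
  assumes "group G" "fin_sym_gen_set G S" "z \<in> carrier G" "s \<in> S"
  shows "word_length G S (s \<otimes>\<^bsub>G\<^esub> z) \<le> Suc (word_length G S z)"
proof -
  obtain ws where w: "length ws = word_length G S z" "set ws \<subseteq> S" "z = foldr (\<otimes>\<^bsub>G\<^esub>) ws \<one>\<^bsub>G\<^esub>"
    using wl_attained[OF assms(1-3)] by blast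
  have "word_length G S (s \<otimes>\<^bsub>G\<^esub> z) \<le> length (s # ws)"
    using w assms(4) by (intro wl_le) auto
  then show ?thesis using w by simp
qed

lemma wl_prod_lower:
  assumes G1: "group G1" and G2: "group G2"
    and S1: "fin_sym_gen_set G1 S1" and S2: "fin_sym_gen_set G2 S2"
    and ws: "set ws \<subseteq> (\<lambda>s. (s, \<one>\<^bsub>G2\<^esub>)) ` S1 \<union> (\<lambda>s. (\<one>\<^bsub>G1\<^esub>, s)) ` S2"
  shows "word_length G1 S1 (fst (foldr (\<otimes>\<^bsub>G1 \<times>\<times> G2\<^esub>) ws \<one>\<^bsub>G1 \<times>\<times> G2\<^esub>))
       + word_length G2 S2 (snd (foldr (\<otimes>\<^bsub>G1 \<times>\<times> G2\<^esub>) ws \<one>\<^bsub>G1 \<times>\<times> G2\<^esub>)) \<le> length ws"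
  using ws
proof (induction ws)
  case Nil
  have "word_length G1 S1 \<one>\<^bsub>G1\<^esub> \<le> 0" using wl_le[of "[]" S1 _ G1] by simp
  moreover have "word_length G2 S2 \<one>\<^bsub>G2\<^esub> \<le> 0" using wl_le[of "[]" S2 _ G2] by simp
  ultimately show ?case by simp
next
  case (Cons p ws)
  have sub1: "S1 \<subseteq> carrier G1" using S1 unfolding fin_sym_gen_set_def by auto
  have sub2: "S2 \<subseteq> carrier G2" using S2 unfolding fin_sym_gen_set_def by auto
  have gp: "group (G1 \<times>\<times> G2)" using G1 G2 by (rule DirProd_group)
  have "set ws \<subseteq> carrier (G1 \<times>\<times> G2)" using Cons.prems sub1 sub2 G1 G2
    by (auto simp: group.is_monoid monoid.one_closed)
  then have rc: "foldr (\<otimes>\<^bsub>G1 \<times>\<times> G2\<^esub>) ws \<one>\<^bsub>G1 \<times>\<times> G2\<^esub> \<in> carrier (G1 \<times>\<times> G2)"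
    by (intro foldr_carrier group.is_monoid gp)
  obtain a b where ab: "foldr (\<otimes>\<^bsub>G1 \<times>\<times> G2\<^esub>) ws \<one>\<^bsub>G1 \<times>\<times> G2\<^esub> = (a, b)" by fastforce
  have a: "a \<in> carrier G1" and b: "b \<in> carrier G2" using rc ab by auto
  have IH: "word_length G1 S1 a + word_length G2 S2 b \<le> length ws" using Cons ab by auto
  from Cons.prems consider s where "s \<in> S1" "p = (s, \<one>\<^bsub>G2\<^esub>)" | t where "t \<in> S2" "p = (\<one>\<^bsub>G1\<^esub>, t)"
    by auto
  then show ?case
  proof cases
    case 1
    have "word_length G1 S1 (s \<otimes>\<^bsub>G1\<^esub> a) \<le> Suc (word_length G1 S1 a)"
      by (rule wl_step[OF G1 S1 a 1(1)])
    then show ?thesis using 1 ab IH b by (simp add: group.is_monoid[OF G2] monoid.l_one)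
  next
    case 2
    have "word_length G2 S2 (t \<otimes>\<^bsub>G2\<^esub> b) \<le> Suc (word_length G2 S2 b)"
      by (rule wl_step[OF G2 S2 b 2(1)])
    then show ?thesis using 2 ab IH a by (simp add: group.is_monoid[OF G1] monoid.l_one)
  qed
qed

lemma foldr_left:
  assumes "monoid G2" "b \<in> carrier G2"
  shows "foldr (\<otimes>\<^bsub>G1 \<times>\<times> G2\<^esub>) (map (\<lambda>s. (s, \<one>\<^bsub>G2\<^esub>)) ws) (a, b) = (foldr (\<otimes>\<^bsub>G1\<^esub>) ws a, b)"
  by (induction ws) (auto simp: monoid.l_one[OF assms(1) assms(2)])

lemma foldr_right:
  assumes "monoid G1" "a \<in> carrier G1"
  shows "foldr (\<otimes>\<^bsub>G1 \<times>\<times> G2\<^esub>) (map (\<lambda>t. (\<one>\<^bsub>G1\<^esub>, t)) ws) (a, c) = (a, foldr (\<otimes>\<^bsub>G2\<^esub>) ws c)"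
  by (induction ws) (auto simp: monoid.l_one[OF assms(1) assms(2)])

lemma wl_prod:
  assumes G1: "group G1" and G2: "group G2"
    and S1: "fin_sym_gen_set G1 S1" and S2: "fin_sym_gen_set G2 S2"
    and x: "x \<in> carrier G1" and y: "y \<in> carrier G2"
  shows "word_length (G1 \<times>\<times> G2) ((\<lambda>s. (s, \<one>\<^bsub>G2\<^esub>)) ` S1 \<union> (\<lambda>s. (\<one>\<^bsub>G1\<^esub>, s)) ` S2) (x, y)
    = word_length G1 S1 x + word_length G2 S2 y"
proof -
  let ?S = "(\<lambda>s. (s, \<one>\<^bsub>G2\<^esub>)) ` S1 \<union> (\<lambda>s. (\<one>\<^bsub>G1\<^esub>, s)) ` S2"
  have m1: "monoid G1" and m2: "monoid G2" using G1 G2 by (auto simp: group.is_monoid)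
  obtain w1 where w1: "length w1 = word_length G1 S1 x" "set w1 \<subseteq> S1" "x = foldr (\<otimes>\<^bsub>G1\<^esub>) w1 \<one>\<^bsub>G1\<^esub>"
    using wl_attained[OF G1 S1 x] by blast
  obtain w2 where w2: "length w2 = word_length G2 S2 y" "set w2 \<subseteq> S2" "y = foldr (\<otimes>\<^bsub>G2\<^esub>) w2 \<one>\<^bsub>G2\<^esub>"
    using wl_attained[OF G2 S2 y] by blast
  define w where "w = map (\<lambda>s. (s, \<one>\<^bsub>G2\<^esub>)) w1 @ map (\<lambda>t. (\<one>\<^bsub>G1\<^esub>, t)) w2"
  have ev: "(x, y) = foldr (\<otimes>\<^bsub>G1 \<times>\<times> G2\<^esub>) w \<one>\<^bsub>G1 \<times>\<times> G2\<^esub>"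
    unfolding w_def using foldr_left[OF m2 y, of G1 w1] foldr_right[OF m1 monoid.one_closed[OF m1], of G2 w2]
      w1(3) w2(3) by simp
  have wS: "set w \<subseteq> ?S" using w1(2) w2(2) unfolding w_def by auto
  have le: "word_length (G1 \<times>\<times> G2) ?S (x, y) \<le> length w" by (rule wl_le[OF wS ev])
  have "\<exists>n ws. length ws = n \<and> set ws \<subseteq> ?S \<and> (x, y) = foldr (\<otimes>\<^bsub>G1 \<times>\<times> G2\<^esub>) ws \<one>\<^bsub>G1 \<times>\<times> G2\<^esub>"
    using wS ev by blast
  then have "\<exists>ws. length ws = word_length (G1 \<times>\<times> G2) ?S (x, y) \<and> set ws \<subseteq> ?S \<and> (x, y) = foldr (\<otimes>\<^bsub>G1 \<times>\<times> G2\<^esub>) ws \<one>\<^bsub>G1 \<times>\<times> G2\<^esub>"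
    unfolding word_length_def by (rule LeastI_ex)
  then obtain v where v: "length v = word_length (G1 \<times>\<times> G2) ?S (x, y)" "set v \<subseteq> ?S"
     "(x, y) = foldr (\<otimes>\<^bsub>G1 \<times>\<times> G2\<^esub>) v \<one>\<^bsub>G1 \<times>\<times> G2\<^esub>" by blast
  have "word_length G1 S1 x + word_length G2 S2 y \<le> length v"
    using wl_prod_lower[OF G1 G2 S1 S2 v(2)] v(3)[symmetric] by simp
  moreover have "length w = word_length G1 S1 x + word_length G2 S2 y" using w1 w2 w_def by simp
  ultimately show ?thesis using le v(1) by linarith
qed

theorem mainTheorem8:
  fixes G1 :: "('a, 'c) monoid_scheme" and G2 :: "('b, 'd) monoid_scheme"
    and S1 :: "'a set" and S2 :: "'b set" and x :: 'a and y :: 'b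
  assumes "group G1" and "group G2"
    and "fin_sym_gen_set G1 S1" and "fin_sym_gen_set G2 S2"
    and "x \<in> carrier G1" and "y \<in> carrier G2"
  shows "Av (G1 \<times>\<times> G2) ((\<lambda>s. (s, \<one>\<^bsub>G2\<^esub>)) ` S1 \<union> (\<lambda>s. (\<one>\<^bsub>G1\<^esub>, s)) ` S2) (x, y)
    = (real (card S1) * Av G1 S1 x + real (card S1) * real (word_length G2 S2 y)
       + real (card S2) * real (word_length G1 S1 x) + real (card S2) * Av G2 S2 y)
      / (real (card S1) + real (card S2))"
proof -
  note G1 = assms(1) and G2 = assms(2) and S1 = assms(3) and S2 = assms(4) and x = assms(5) and y = assms(6)
  let ?S = "(\<lambda>s. (s, \<one>\<^bsub>G2\<^esub>)) ` S1 \<union> (\<lambda>s. (\<one>\<^bsub>G1\<^esub>, s)) ` S2"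
  let ?P = "G1 \<times>\<times> G2"
  have f1: "finite S1" and c1: "S1 \<subseteq> carrier G1" and n1: "\<one>\<^bsub>G1\<^esub> \<notin> S1"
    using S1 unfolding fin_sym_gen_set_def by auto
  have f2: "finite S2" and c2: "S2 \<subseteq> carrier G2" and n2: "\<one>\<^bsub>G2\<^esub> \<notin> S2"
    using S2 unfolding fin_sym_gen_set_def by auto
  interpret A: group G1 by fact
  interpret B: group G2 by fact
  define A1 where "A1 = (\<Sum>s\<in>S1. real (word_length G1 S1 (inv\<^bsub>G1\<^esub> s \<otimes>\<^bsub>G1\<^esub> x \<otimes>\<^bsub>G1\<^esub> s)))"
  define A2 where "A2 = (\<Sum>s\<in>S2. real (word_length G2 S2 (inv\<^bsub>G2\<^esub> s \<otimes>\<^bsub>G2\<^esub> y \<otimes>\<^bsub>G2\<^esub> s)))"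
  let ?f = "\<lambda>a. real (word_length ?P ?S (inv\<^bsub>?P\<^esub> a \<otimes>\<^bsub>?P\<^esub> (x, y) \<otimes>\<^bsub>?P\<^esub> a))"
  have disj: "(\<lambda>s. (s, \<one>\<^bsub>G2\<^esub>)) ` S1 \<inter> (\<lambda>s. (\<one>\<^bsub>G1\<^esub>, s)) ` S2 = {}" using n1 by auto
  have inj1: "inj_on (\<lambda>s. (s, \<one>\<^bsub>G2\<^esub>)) S1" by (auto simp: inj_on_def)
  have inj2: "inj_on (\<lambda>s. (\<one>\<^bsub>G1\<^esub>, s)) S2" by (auto simp: inj_on_def)
  have "sum ?f ?S = sum ?f ((\<lambda>s. (s, \<one>\<^bsub>G2\<^esub>)) ` S1) + sum ?f ((\<lambda>s. (\<one>\<^bsub>G1\<^esub>, s)) ` S2)"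
    using f1 f2 disj by (intro sum.union_disjoint) auto
  also have "sum ?f ((\<lambda>s. (s, \<one>\<^bsub>G2\<^esub>)) ` S1) = (\<Sum>s\<in>S1. ?f (s, \<one>\<^bsub>G2\<^esub>))"
    using inj1 by (simp add: sum.reindex)
  also have "\<dots> = (\<Sum>s\<in>S1. real (word_length G1 S1 (inv\<^bsub>G1\<^esub> s \<otimes>\<^bsub>G1\<^esub> x \<otimes>\<^bsub>G1\<^esub> s)) + real (word_length G2 S2 y))"
  proof (rule sum.cong[OF refl])
    fix s assume s: "s \<in> S1"
    then have sc: "s \<in> carrier G1" using c1 by auto
    have "inv\<^bsub>?P\<^esub> (s, \<one>\<^bsub>G2\<^esub>) \<otimes>\<^bsub>?P\<^esub> (x, y) \<otimes>\<^bsub>?P\<^esub> (s, \<one>\<^bsub>G2\<^esub>) = (inv\<^bsub>G1\<^esub> s \<otimes>\<^bsub>G1\<^esub> x \<otimes>\<^bsub>G1\<^esub> s, y)"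
      using sc y by (simp add: inv_DirProd[OF G1 G2])
    then show "?f (s, \<one>\<^bsub>G2\<^esub>) = real (word_length G1 S1 (inv\<^bsub>G1\<^esub> s \<otimes>\<^bsub>G1\<^esub> x \<otimes>\<^bsub>G1\<^esub> s)) + real (word_length G2 S2 y)"
      using wl_prod[OF G1 G2 S1 S2 _ y, of "inv\<^bsub>G1\<^esub> s \<otimes>\<^bsub>G1\<^esub> x \<otimes>\<^bsub>G1\<^esub> s"] sc x by simp
  qed
  also have "\<dots> = A1 + real (card S1) * real (word_length G2 S2 y)"
    unfolding A1_def by (simp add: sum.distrib)
  also have "sum ?f ((\<lambda>s. (\<one>\<^bsub>G1\<^esub>, s)) ` S2) = (\<Sum>s\<in>S2. ?f (\<one>\<^bsub>G1\<^esub>, s))"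
    using inj2 by (simp add: sum.reindex)
  also have "\<dots> = (\<Sum>s\<in>S2. real (word_length G1 S1 x) + real (word_length G2 S2 (inv\<^bsub>G2\<^esub> s \<otimes>\<^bsub>G2\<^esub> y \<otimes>\<^bsub>G2\<^esub> s)))"
  proof (rule sum.cong[OF refl])
    fix s assume s: "s \<in> S2"
    then have sc: "s \<in> carrier G2" using c2 by auto
    have "inv\<^bsub>?P\<^esub> (\<one>\<^bsub>G1\<^esub>, s) \<otimes>\<^bsub>?P\<^esub> (x, y) \<otimes>\<^bsub>?P\<^esub> (\<one>\<^bsub>G1\<^esub>, s) = (x, inv\<^bsub>G2\<^esub> s \<otimes>\<^bsub>G2\<^esub> y \<otimes>\<^bsub>G2\<^esub> s)"
      using sc x by (simp add: inv_DirProd[OF G1 G2])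
    then show "?f (\<one>\<^bsub>G1\<^esub>, s) = real (word_length G1 S1 x) + real (word_length G2 S2 (inv\<^bsub>G2\<^esub> s \<otimes>\<^bsub>G2\<^esub> y \<otimes>\<^bsub>G2\<^esub> s))"
      using wl_prod[OF G1 G2 S1 S2 x, of "inv\<^bsub>G2\<^esub> s \<otimes>\<^bsub>G2\<^esub> y \<otimes>\<^bsub>G2\<^esub> s"] sc y by simp
  qed
  also have "\<dots> = real (card S2) * real (word_length G1 S1 x) + A2"
    unfolding A2_def by (simp add: sum.distrib)
  finally have sumeq: "sum ?f ?S = A1 + real (card S1) * real (word_length G2 S2 y) + (real (card S2) * real (word_length G1 S1 x) + A2)" .
  have card: "card ?S = card S1 + card S2"
    using f1 f2 disj inj1 inj2 by (simp add: card_Un_disjoint card_image)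
  have e1: "real (card S1) * Av G1 S1 x = A1"
  proof (cases "card S1 = 0")
    case True then have "S1 = {}" using f1 by simp
    then show ?thesis unfolding A1_def by simp
  next
    case False then show ?thesis unfolding Av_def A1_def by simp
  qed
  have e2: "real (card S2) * Av G2 S2 y = A2"
  proof (cases "card S2 = 0")
    case True then have "S2 = {}" using f2 by simp
    then show ?thesis unfolding A2_def by simp
  next
    case False then show ?thesis unfolding Av_def A2_def by simp
  qed
  show ?thesis unfolding Av_def[of ?P] using sumeq card e1 e2 by (simp add: algebra_simps)
qed

end
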